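(* Let $M$ and $\tilde M$ be Markov decision processes over the same action space $\mathcal{A}$, with state spaces $\mathcal{S}$ and $\tilde{\mathcal{S}}=(\mathcal{S}\setminus\{s_0\})\cup\{s_0^1,s_0^2\}$ respectively, where $s_0^1,s_0^2$ form a split of the state $s_0\in\mathcal{S}$. Let $\pi^*:\mathcal{S}\to\mathcal{A}$ be an optimal policy in $M$. Then there exists a policy $\tilde\pi:\tilde{\mathcal{S}}\to\mathcal{A}$ with $\tilde\pi(s_0^1)=\tilde\pi(s_0^2)=\pi^*(s_0)$ such that $V^{\tilde\pi}_{\tilde M}=V^{\pi^*}_M$, and for every policy $\pi'\neq\tilde\pi$ on $\tilde{\mathcal{S}}$ we have $V^{\pi'}_{\tilde M}\le V^{\tilde\pi}_{\tilde M}$.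
   Context: $\tilde M$ being obtained from $M$ by splitting $s_0$ into $s_0^1,s_0^2$ means: writing $\phi:\tilde{\mathcal{S}}\to\mathcal{S}$ for the map sending $s_0^1,s_0^2$ to $s_0$ and fixing all other states, $\tilde M$ is itself Markovian and for every $\tilde s\in\tilde{\mathcal{S}}$ and $a\in\mathcal{A}$ the reward satisfies $\tilde R(\tilde s,a)=R(\phi(\tilde s),a)$, and the transition probabilities satisfy $\tilde P(s'\mid\tilde s,a)=P(s'\mid\phi(\tilde s),a)$ for $s'\neq s_0$ and $\tilde P(s_0^1\mid\tilde s,a)+\tilde P(s_0^2\mid\tilde s,a)=P(s_0\mid\phi(\tilde s),a)$, with $\tilde P(\cdot\mid s_0^1,a)=\tilde P(\cdot\mid s_0^2,a)$ and $\tilde R(s_0^1,a)=\tilde R(s_0^2,a)$ (the initial state distribution is split analogously). $V^{\pi}_M$ denotes the value (expected discounted return, discount $\gamma$) of policy $\pi$ in MDP $M$. *)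

theory Defs
  imports "HOL-Probability.Probability"
begin

text \<open>A finite MDP with states of type 's, actions of type 'a, transition kernel
  P s a (a distribution over next states), reward R s a, initial distribution mu and
  discount gamma.\<close>

primrec state_dist :: "('s \<Rightarrow> 'a \<Rightarrow> 's pmf) \<Rightarrow> 's pmf \<Rightarrow> ('s \<Rightarrow> 'a) \<Rightarrow> nat \<Rightarrow> 's pmf" where
  "state_dist P mu pol 0 = mu"
| "state_dist P mu pol (Suc n) = bind_pmf (state_dist P mu pol n) (\<lambda>s. P s (pol s))"

definition policy_value ::
  "real \<Rightarrow> ('s \<Rightarrow> 'a \<Rightarrow> 's pmf) \<Rightarrow> ('s \<Rightarrow> 'a \<Rightarrow> real) \<Rightarrow> 's pmf \<Rightarrow> ('s \<Rightarrow> 'a) \<Rightarrow> real" where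
  "policy_value gamma P R mu pol =
     (\<Sum>n. gamma ^ n * measure_pmf.expectation (state_dist P mu pol n) (\<lambda>s. R s (pol s)))"

definition optimal_policy ::
  "real \<Rightarrow> ('s \<Rightarrow> 'a \<Rightarrow> 's pmf) \<Rightarrow> ('s \<Rightarrow> 'a \<Rightarrow> real) \<Rightarrow> 's pmf \<Rightarrow> ('s \<Rightarrow> 'a) \<Rightarrow> bool" where
  "optimal_policy gamma P R mu pol \<longleftrightarrow>
     (\<forall>pol'. policy_value gamma P R mu pol' \<le> policy_value gamma P R mu pol)"

text \<open>The state space 't of the split MDP is (S - {s0}) \<union> {s01, s02}, realised via the
  map phi :: 't => 's which sends s01, s02 to s0 and is a bijection elsewhere.\<close>
definition split_map :: "('t \<Rightarrow> 's) \<Rightarrow> 's \<Rightarrow> 't \<Rightarrow> 't \<Rightarrow> bool" where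
  "split_map phi s0 s01 s02 \<longleftrightarrow>
     s01 \<noteq> s02 \<and> phi s01 = s0 \<and> phi s02 = s0 \<and>
     bij_betw phi (UNIV - {s01, s02}) (UNIV - {s0})"

definition is_split_mdp ::
  "('t \<Rightarrow> 's) \<Rightarrow> 's \<Rightarrow> 't \<Rightarrow> 't \<Rightarrow>
   ('s \<Rightarrow> 'a \<Rightarrow> 's pmf) \<Rightarrow> ('s \<Rightarrow> 'a \<Rightarrow> real) \<Rightarrow> 's pmf \<Rightarrow>
   ('t \<Rightarrow> 'a \<Rightarrow> 't pmf) \<Rightarrow> ('t \<Rightarrow> 'a \<Rightarrow> real) \<Rightarrow> 't pmf \<Rightarrow> bool" where
  "is_split_mdp phi s0 s01 s02 P R mu Pt Rt mut \<longleftrightarrow>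
     split_map phi s0 s01 s02 \<and>
     (\<forall>t a. Rt t a = R (phi t) a) \<and>
     (\<forall>t a t'. phi t' \<noteq> s0 \<longrightarrow> pmf (Pt t a) t' = pmf (P (phi t) a) (phi t')) \<and>
     (\<forall>t a. pmf (Pt t a) s01 + pmf (Pt t a) s02 = pmf (P (phi t) a) s0) \<and>
     (\<forall>a. Pt s01 a = Pt s02 a) \<and>
     (\<forall>a. Rt s01 a = Rt s02 a) \<and>
     (\<forall>t'. phi t' \<noteq> s0 \<longrightarrow> pmf mut t' = pmf mu (phi t')) \<and>
     pmf mut s01 + pmf mut s02 = pmf mu s0"

end

theory Submission
  imports Defs
begin

definition EE :: "'x::finite pmf \<Rightarrow> ('x \<Rightarrow> real) \<Rightarrow> real" where
  "EE p f = (\<Sum>x\<in>UNIV. pmf p x * f x)"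

lemma expect_Ex: "measure_pmf.expectation (p::'x::finite pmf) f = EE p f"
  by (simp add: EE_def integral_measure_pmf_real[of UNIV] mult.commute)

lemma EE_bind: "EE (bind_pmf p K) f = EE p (\<lambda>x. EE (K x) f)"
proof -
  have "EE (bind_pmf p K) f = (\<Sum>y\<in>UNIV. (\<Sum>x\<in>UNIV. pmf p x * pmf (K x) y) * f y)"
    unfolding EE_def pmf_bind expect_Ex by (simp add: EE_def)
  also have "\<dots> = (\<Sum>x\<in>UNIV. \<Sum>y\<in>UNIV. pmf p x * (pmf (K x) y * f y))"
    by (subst sum.swap) (simp add: sum_distrib_right mult.assoc)
  also have "\<dots> = EE p (\<lambda>x. EE (K x) f)"
    by (simp add: EE_def sum_distrib_left)
  finally show ?thesis .
qed

lemma EE_mono: "(\<And>x. f x \<le> g x) \<Longrightarrow> EE p f \<le> EE p g"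
  unfolding EE_def by (intro sum_mono mult_left_mono) auto

lemma EE_one: "(\<Sum>x\<in>UNIV. pmf (p::'x::finite pmf) x) = 1"
  by (rule sum_pmf_eq_1) auto

lemma EE_bound: assumes "\<And>x. \<bar>f x\<bar> \<le> B" shows "\<bar>EE p f\<bar> \<le> B"
proof -
  have "\<bar>EE p f\<bar> \<le> (\<Sum>x\<in>UNIV. \<bar>pmf p x * f x\<bar>)" unfolding EE_def by (rule sum_abs)
  also have "\<dots> \<le> (\<Sum>x\<in>UNIV. pmf p x * B)"
    by (intro sum_mono) (auto simp: abs_mult intro!: mult_left_mono assms)
  also have "\<dots> = B" by (simp add: sum_distrib_right[symmetric] EE_one)
  finally show ?thesis .
qed

lemma EE_lin: "EE p (\<lambda>x. f x + c * g x) = EE p f + c * EE p g"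
  unfolding EE_def by (simp add: algebra_simps sum.distrib sum_distrib_left)

lemma EE_return: "EE (return_pmf x) f = f x"
  by (simp flip: expect_Ex)

lemma EE_map: "EE (map_pmf h p) f = EE p (\<lambda>x. f (h x))"
  by (simp flip: expect_Ex)

lemma state_dist_shift:
  "state_dist P mu pol (Suc n) = state_dist P (bind_pmf mu (\<lambda>s. P s (pol s))) pol n"
  by (induction n) (simp_all add: bind_assoc_pmf)

lemma state_dist_bind:
  "state_dist P (bind_pmf mu f) pol n = bind_pmf mu (\<lambda>x. state_dist P (f x) pol n)"
  by (induction n) (simp_all add: bind_assoc_pmf)

lemma pv_summable:
  fixes P :: "'x::finite \<Rightarrow> 'b \<Rightarrow> 'x pmf" and R :: "'x \<Rightarrow> 'b \<Rightarrow> real" and gamma :: real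
  assumes "0 \<le> gamma" "gamma < 1"
  shows "summable (\<lambda>n. gamma ^ n * measure_pmf.expectation (state_dist P mu pol n) (\<lambda>s. R s (pol s)))"
proof -
  define B where "B = (\<Sum>x\<in>UNIV. \<bar>R x (pol x)\<bar>)"
  have b: "\<bar>R x (pol x)\<bar> \<le> B" for x
    unfolding B_def by (rule member_le_sum) auto
  have nb: "norm (gamma ^ n * measure_pmf.expectation (state_dist P mu pol n) (\<lambda>s. R s (pol s))) \<le> B * gamma ^ n" for n
  proof -
    have "\<bar>EE (state_dist P mu pol n) (\<lambda>s. R s (pol s))\<bar> \<le> B" by (rule EE_bound, rule b)
    then show ?thesis using assms by (simp add: expect_Ex abs_mult mult.commute[of B] mult_left_mono)
  qed
  have sg: "summable (\<lambda>n. B * gamma ^ n)"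
    using assms by (intro summable_mult summable_geometric) auto
  show ?thesis by (rule summable_comparison_test'[OF sg nb])
qed

lemma pv_linear:
  fixes P :: "'x::finite \<Rightarrow> 'b \<Rightarrow> 'x pmf" and R :: "'x \<Rightarrow> 'b \<Rightarrow> real" and gamma :: real
  assumes "0 \<le> gamma" "gamma < 1"
  shows "policy_value gamma P R mu pol = EE mu (\<lambda>x. policy_value gamma P R (return_pmf x) pol)"
proof -
  have "policy_value gamma P R mu pol =
     (\<Sum>n. \<Sum>x\<in>UNIV. pmf mu x * (gamma ^ n * measure_pmf.expectation (state_dist P (return_pmf x) pol n) (\<lambda>s. R s (pol s))))"
    unfolding policy_value_def
  proof (intro suminf_cong)
    fix n
    have "state_dist P mu pol n = bind_pmf mu (\<lambda>x. state_dist P (return_pmf x) pol n)"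
      using state_dist_bind[of P mu return_pmf pol n] by (simp add: bind_return_pmf')
    then show "gamma ^ n * measure_pmf.expectation (state_dist P mu pol n) (\<lambda>s. R s (pol s)) =
      (\<Sum>x\<in>UNIV. pmf mu x * (gamma ^ n * measure_pmf.expectation (state_dist P (return_pmf x) pol n) (\<lambda>s. R s (pol s))))"
      by (simp add: expect_Ex EE_bind) (simp add: EE_def sum_distrib_left algebra_simps)
  qed
  also have "\<dots> = (\<Sum>x\<in>UNIV. \<Sum>n. pmf mu x * (gamma ^ n * measure_pmf.expectation (state_dist P (return_pmf x) pol n) (\<lambda>s. R s (pol s))))"
    by (rule suminf_sum) (intro summable_mult pv_summable assms)
  also have "\<dots> = EE mu (\<lambda>x. policy_value gamma P R (return_pmf x) pol)"
    unfolding EE_def policy_value_def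
    by (intro sum.cong refl suminf_mult pv_summable assms)
  finally show ?thesis .
qed

lemma pv_bellman:
  fixes P :: "'x::finite \<Rightarrow> 'b \<Rightarrow> 'x pmf" and R :: "'x \<Rightarrow> 'b \<Rightarrow> real" and gamma :: real
  assumes "0 \<le> gamma" "gamma < 1"
  shows "policy_value gamma P R (return_pmf x) pol = R x (pol x) +
     gamma * EE (P x (pol x)) (\<lambda>y. policy_value gamma P R (return_pmf y) pol)"
proof -
  let ?f = "\<lambda>n. gamma ^ n * measure_pmf.expectation (state_dist P (return_pmf x) pol n) (\<lambda>s. R s (pol s))"
  have s: "summable ?f" by (rule pv_summable[OF assms])
  have "(\<Sum>n. ?f (Suc n)) = (\<Sum>n. gamma * (gamma ^ n * measure_pmf.expectation (state_dist P (P x (pol x)) pol n) (\<lambda>s. R s (pol s))))"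
    by (intro suminf_cong) (simp only: state_dist_shift bind_return_pmf power_Suc mult.assoc)
  also have "\<dots> = gamma * policy_value gamma P R (P x (pol x)) pol"
    unfolding policy_value_def by (intro suminf_mult pv_summable assms)
  also have "\<dots> = gamma * EE (P x (pol x)) (\<lambda>y. policy_value gamma P R (return_pmf y) pol)"
    by (subst pv_linear[OF assms]) (rule refl)
  finally have "(\<Sum>n. ?f (Suc n)) = \<dots>" .
  moreover have "?f 0 = R x (pol x)" by (simp add: expect_Ex EE_return)
  ultimately show ?thesis unfolding policy_value_def using suminf_split_head[OF s] by simp
qed


lemma pv_super:
  fixes P :: "'x::finite \<Rightarrow> 'b \<Rightarrow> 'x pmf" and R :: "'x \<Rightarrow> 'b \<Rightarrow> real" and gamma :: real
  assumes g: "0 \<le> gamma" "gamma < 1"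
    and W: "\<And>x. R x (pol x) + gamma * EE (P x (pol x)) W \<le> W x"
  shows "policy_value gamma P R mu pol \<le> EE mu W"
proof -
  define e where "e n = EE (state_dist P mu pol n) (\<lambda>s. R s (pol s))" for n
  define w where "w n = EE (state_dist P mu pol n) W" for n
  have step: "e n + gamma * w (Suc n) \<le> w n" for n
  proof -
    have "e n + gamma * w (Suc n) = EE (state_dist P mu pol n) (\<lambda>x. R x (pol x) + gamma * EE (P x (pol x)) W)"
      unfolding e_def w_def by (simp add: EE_bind EE_lin)
    also have "\<dots> \<le> w n" unfolding w_def by (rule EE_mono[OF W])
    finally show ?thesis .
  qed
  have tel: "(\<Sum>n<N. gamma ^ n * e n) + gamma ^ N * w N \<le> w 0" for N
  proof (induction N)
    case 0 then show ?case by simp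
  next
    case (Suc N)
    have "gamma ^ N * (e N + gamma * w (Suc N)) \<le> gamma ^ N * w N"
      using step[of N] g by (intro mult_left_mono) auto
    then show ?case using Suc by (simp add: algebra_simps)
  qed
  define B where "B = (\<Sum>x\<in>UNIV. \<bar>W x\<bar>)"
  have b: "\<bar>W x\<bar> \<le> B" for x unfolding B_def by (rule member_le_sum) auto
  have le: "(\<Sum>n<N. gamma ^ n * e n) \<le> w 0 + gamma ^ N * B" for N
  proof -
    have "\<bar>w N\<bar> \<le> B" unfolding w_def by (rule EE_bound, rule b)
    then have "- (gamma ^ N * w N) \<le> gamma ^ N * B"
      using g by (smt (verit, best) abs_le_D2 mult_left_mono mult_minus_right zero_le_power)
    then show ?thesis using tel[of N] by linarith
  qed
  have s: "summable (\<lambda>n. gamma ^ n * e n)"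
    unfolding e_def using pv_summable[OF g, of P mu pol R] by (simp add: expect_Ex)
  have l1: "(\<lambda>N. \<Sum>n<N. gamma ^ n * e n) \<longlonglongrightarrow> policy_value gamma P R mu pol"
    using summable_LIMSEQ[OF s] unfolding policy_value_def e_def by (simp add: expect_Ex)
  have l2: "(\<lambda>N. w 0 + gamma ^ N * B) \<longlonglongrightarrow> w 0 + 0 * B"
    using g by (intro tendsto_intros) auto
  have "policy_value gamma P R mu pol \<le> w 0 + 0 * B"
    by (rule LIMSEQ_le[OF l1 l2]) (use le in auto)
  then show ?thesis by (simp add: w_def)
qed

lemma pv_sub:
  fixes P :: "'x::finite \<Rightarrow> 'b \<Rightarrow> 'x pmf" and R :: "'x \<Rightarrow> 'b \<Rightarrow> real" and gamma :: real
  assumes g: "0 \<le> gamma" "gamma < 1"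
    and W: "\<And>x. W x \<le> R x (pol x) + gamma * EE (P x (pol x)) W"
  shows "EE mu W \<le> policy_value gamma P R mu pol"
proof -
  have "policy_value gamma P (\<lambda>x a. - R x a) mu pol \<le> EE mu (\<lambda>x. - W x)"
  proof (rule pv_super[OF g])
    fix x
    have "EE (P x (pol x)) (\<lambda>x. - W x) = - EE (P x (pol x)) W" by (simp add: EE_def sum_negf)
    then show "- R x (pol x) + gamma * EE (P x (pol x)) (\<lambda>x. - W x) \<le> - W x" using W[of x] by simp
  qed
  moreover have "policy_value gamma P (\<lambda>x a. - R x a) mu pol = - policy_value gamma P R mu pol"
    unfolding policy_value_def
    using suminf_minus[OF pv_summable[OF g, of P mu pol R]]
    by (simp add: expect_Ex EE_def sum_negf)
  ultimately show ?thesis by (simp add: EE_def sum_negf)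
qed


lemma split_pre:
  assumes "split_map phi s0 s01 s02"
  shows "phi t = s0 \<longleftrightarrow> t = s01 \<or> t = s02"
proof -
  from assms have b: "bij_betw phi (UNIV - {s01, s02}) (UNIV - {s0})" and "phi s01 = s0" "phi s02 = s0"
    by (auto simp: split_map_def)
  moreover have "t \<notin> {s01, s02} \<Longrightarrow> phi t \<noteq> s0"
    using bij_betw_apply[OF b, of t] by auto
  ultimately show ?thesis by auto
qed

lemma split_inv:
  assumes "split_map phi s0 s01 s02" "t \<noteq> s01" "t \<noteq> s02"
  shows "inv_into (UNIV - {s01, s02}) phi (phi t) = t"
proof -
  from assms(1) have b: "bij_betw phi (UNIV - {s01, s02}) (UNIV - {s0})"
    by (auto simp: split_map_def)
  show ?thesis using assms(2,3) bij_betw_imp_inj_on[OF b] by (intro inv_into_f_f) auto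
qed

lemma split_map_pmf:
  fixes phi :: "'t::finite \<Rightarrow> 's::finite"
  assumes sm: "split_map phi s0 s01 s02"
    and h1: "\<And>t'. phi t' \<noteq> s0 \<Longrightarrow> pmf p t' = pmf q (phi t')"
    and h2: "pmf p s01 + pmf p s02 = pmf q s0"
  shows "map_pmf phi p = q"
proof (rule pmf_eqI)
  fix s
  have d: "s01 \<noteq> s02" using sm by (simp add: split_map_def)
  from sm have b: "bij_betw phi (UNIV - {s01, s02}) (UNIV - {s0})"
    by (auto simp: split_map_def)
  have "pmf (map_pmf phi p) s = sum (pmf p) (phi -` {s})"
    by (simp add: pmf_map measure_measure_pmf_finite)
  also have "\<dots> = pmf q s"
  proof (cases "s = s0")
    case True
    then have "phi -` {s} = {s01, s02}" using split_pre[OF sm] by auto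
    then show ?thesis using d h2 True by simp
  next
    case False
    then have "s \<in> phi ` (UNIV - {s01, s02})" using bij_betw_imp_surj_on[OF b] by auto
    then obtain t' where t': "t' \<noteq> s01" "t' \<noteq> s02" "phi t' = s" by auto
    have "phi t = s \<longleftrightarrow> t = t'" for t
    proof
      assume a: "phi t = s"
      then have "t \<noteq> s01" "t \<noteq> s02" using split_pre[OF sm, of t] False by auto
      then show "t = t'" using t' a split_inv[OF sm] by metis
    qed (use t' in simp)
    then have "phi -` {s} = {t'}" by auto
    then show ?thesis using h1[of t'] t' False by simp
  qed
  finally show "pmf (map_pmf phi p) s = pmf q s" .
qed

lemma lump_dist:
  assumes "map_pmf phi mut = mu" "\<And>t a. map_pmf phi (Pt t a) = P (phi t) a"
  shows "map_pmf phi (state_dist Pt mut (\<lambda>t. sig (phi t)) n) = state_dist P mu sig n"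
proof (induction n)
  case 0 then show ?case by (simp add: assms)
next
  case (Suc n)
  show ?case by (simp add: Suc.IH[symmetric] assms map_bind_pmf bind_map_pmf)
qed

lemma lump_value:
  assumes "map_pmf phi mut = mu" "\<And>t a. map_pmf phi (Pt t a) = P (phi t) a"
    and "\<And>t a. Rt t a = R (phi t) a"
  shows "policy_value gamma Pt Rt mut (\<lambda>t. sig (phi t)) = policy_value gamma P R mu sig"
  unfolding policy_value_def
proof (intro suminf_cong)
  fix n
  have "measure_pmf.expectation (state_dist Pt mut (\<lambda>t. sig (phi t)) n) (\<lambda>s. Rt s (sig (phi s)))
     = measure_pmf.expectation (map_pmf phi (state_dist Pt mut (\<lambda>t. sig (phi t)) n)) (\<lambda>s. R s (sig s))"
    by (simp add: assms(3))
  also have "\<dots> = measure_pmf.expectation (state_dist P mu sig n) (\<lambda>s. R s (sig s))"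
    by (simp only: lump_dist[where phi=phi and mut=mut and mu=mu and Pt=Pt and P=P, OF assms(1,2)])
  finally show "gamma ^ n * measure_pmf.expectation (state_dist Pt mut (\<lambda>t. sig (phi t)) n) (\<lambda>s. Rt s (sig (phi s))) =
      gamma ^ n * measure_pmf.expectation (state_dist P mu sig n) (\<lambda>s. R s (sig s))" by simp
qed

lemma two_pol:
  fixes P :: "'x::finite \<Rightarrow> 'b \<Rightarrow> 'x pmf" and R :: "'x \<Rightarrow> 'b \<Rightarrow> real" and gamma :: real
  assumes g: "0 \<le> gamma" "gamma < 1"
    and agree: "\<And>s. s \<noteq> s0 \<Longrightarrow> sig' s = sig s"
    and le: "policy_value gamma P R (return_pmf s0) sig' \<le> policy_value gamma P R (return_pmf s0) sig"
  shows "R s0 (sig' s0) + gamma * EE (P s0 (sig' s0)) (\<lambda>y. policy_value gamma P R (return_pmf y) sig)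
     \<le> policy_value gamma P R (return_pmf s0) sig"
proof (rule ccontr)
  define v where "v y = policy_value gamma P R (return_pmf y) sig" for y
  define v' where "v' y = policy_value gamma P R (return_pmf y) sig'" for y
  assume "\<not> ?thesis"
  then have gt: "v s0 < R s0 (sig' s0) + gamma * EE (P s0 (sig' s0)) v" unfolding v_def by simp
  have sub: "v x \<le> R x (sig' x) + gamma * EE (P x (sig' x)) v" for x
  proof (cases "x = s0")
    case True then show ?thesis using gt by simp
  next
    case False
    then show ?thesis using pv_bellman[OF g, where P=P and R=R and x=x and pol=sig] agree[OF False] unfolding v_def by simp
  qed
  have vv: "v x \<le> v' x" for x
    using pv_sub[OF g, where W=v and P=P and R=R and pol=sig' and mu="return_pmf x", OF sub] by (simp add: EE_return v'_def)
  have "EE (P s0 (sig' s0)) v \<le> EE (P s0 (sig' s0)) v'" by (rule EE_mono[OF vv])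
  then have "R s0 (sig' s0) + gamma * EE (P s0 (sig' s0)) v \<le> v' s0"
    using pv_bellman[OF g, where P=P and R=R and x=s0 and pol=sig'] g unfolding v'_def by (simp add: mult_left_mono)
  then show False using gt le unfolding v_def v'_def by simp
qed

lemma dominate:
  fixes P :: "'x::finite \<Rightarrow> 'b \<Rightarrow> 'x pmf" and R :: "'x \<Rightarrow> 'b \<Rightarrow> real" and gamma :: real
  assumes g: "0 \<le> gamma" "gamma < 1"
    and agree: "\<And>s. s \<noteq> s0 \<Longrightarrow> sig2 s = sig1 s"
  shows "\<exists>sig\<in>{sig1, sig2}. \<forall>a\<in>{sig1 s0, sig2 s0}.
     R s0 a + gamma * EE (P s0 a) (\<lambda>y. policy_value gamma P R (return_pmf y) sig)
     \<le> policy_value gamma P R (return_pmf s0) sig"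
proof (cases "policy_value gamma P R (return_pmf s0) sig2 \<le> policy_value gamma P R (return_pmf s0) sig1")
  case True
  show ?thesis
    using two_pol[OF g, where P=P and R=R, OF agree True] pv_bellman[OF g, where P=P and R=R and x=s0 and pol=sig1] by (intro bexI[of _ sig1]) auto
next
  case False
  have h: "R s0 (sig1 s0) + gamma * EE (P s0 (sig1 s0)) (\<lambda>y. policy_value gamma P R (return_pmf y) sig2)
     \<le> policy_value gamma P R (return_pmf s0) sig2"
    by (rule two_pol[OF g]) (use agree False in auto)
  show ?thesis
    using h pv_bellman[OF g, where P=P and R=R and x=s0 and pol=sig2] by (intro bexI[of _ sig2]) auto
qed


theorem theorem1:
  fixes phi :: "'t::finite \<Rightarrow> 's::finite"
    and s0 :: 's and s01 s02 :: 't
    and P :: "'s \<Rightarrow> 'a \<Rightarrow> 's pmf" and R :: "'s \<Rightarrow> 'a \<Rightarrow> real" and mu :: "'s pmf"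
    and Pt :: "'t \<Rightarrow> 'a \<Rightarrow> 't pmf" and Rt :: "'t \<Rightarrow> 'a \<Rightarrow> real" and mut :: "'t pmf"
    and gamma :: real and pistar :: "'s \<Rightarrow> 'a"
  assumes "0 \<le> gamma" and "gamma < 1"
    and "is_split_mdp phi s0 s01 s02 P R mu Pt Rt mut"
    and "optimal_policy gamma P R mu pistar"
  shows "\<exists>pit :: 't \<Rightarrow> 'a.
           pit s01 = pistar s0 \<and> pit s02 = pistar s0 \<and>
           policy_value gamma Pt Rt mut pit = policy_value gamma P R mu pistar \<and>
           (\<forall>pi'. pi' \<noteq> pit \<longrightarrow> policy_value gamma Pt Rt mut pi' \<le> policy_value gamma Pt Rt mut pit)"
proof -
  note g = assms(1,2)
  have sm: "split_map phi s0 s01 s02" using assms(3) by (simp add: is_split_mdp_def)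
  have s01: "phi s01 = s0" and s02: "phi s02 = s0" using sm by (auto simp: split_map_def)
  have mP: "map_pmf phi (Pt t a) = P (phi t) a" for t a
    by (rule split_map_pmf[OF sm]) (use assms(3) in \<open>auto simp: is_split_mdp_def\<close>)
  have mmu: "map_pmf phi mut = mu"
    by (rule split_map_pmf[OF sm]) (use assms(3) in \<open>auto simp: is_split_mdp_def\<close>)
  have mR: "Rt t a = R (phi t) a" for t a using assms(3) by (simp add: is_split_mdp_def)
  have val: "policy_value gamma Pt Rt mut (\<lambda>t. sig (phi t)) = policy_value gamma P R mu sig" for sig
    by (rule lump_value[where phi=phi and mut=mut and mu=mu and Pt=Pt and P=P and Rt=Rt and R=R, OF mmu mP mR])
  have opt: "policy_value gamma P R mu sig \<le> policy_value gamma P R mu pistar" for sig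
    using assms(4) by (simp add: optimal_policy_def)
  have main: "policy_value gamma Pt Rt mut pi' \<le> policy_value gamma P R mu pistar" for pi'
  proof -
    define psi where "psi = inv_into (UNIV - {s01, s02}) phi"
    define sig1 where "sig1 s = (if s = s0 then pi' s01 else pi' (psi s))" for s
    define sig2 where "sig2 s = (if s = s0 then pi' s02 else pi' (psi s))" for s
    have agree: "\<And>s. s \<noteq> s0 \<Longrightarrow> sig2 s = sig1 s" by (simp add: sig1_def sig2_def)
    have ex: "\<exists>sig\<in>{sig1, sig2}. \<forall>a\<in>{sig1 s0, sig2 s0}. R s0 a + gamma * EE (P s0 a) (\<lambda>y. policy_value gamma P R (return_pmf y) sig)
           \<le> policy_value gamma P R (return_pmf s0) sig"
      by (rule dominate[OF g agree])
    then obtain sig where sig: "sig \<in> {sig1, sig2}" and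
      dom: "\<forall>a\<in>{sig1 s0, sig2 s0}. R s0 a + gamma * EE (P s0 a) (\<lambda>y. policy_value gamma P R (return_pmf y) sig)
           \<le> policy_value gamma P R (return_pmf s0) sig"
      by (rule bexE)
    define v where "v y = policy_value gamma P R (return_pmf y) sig" for y
    have super: "Rt t (pi' t) + gamma * EE (Pt t (pi' t)) (\<lambda>t. v (phi t)) \<le> v (phi t)" for t
    proof -
      have e: "EE (Pt t a) (\<lambda>t. v (phi t)) = EE (P (phi t) a) v" for a
        using EE_map[of phi "Pt t a" v] mP by simp
      show ?thesis
      proof (cases "t = s01 \<or> t = s02")
        case True
        then have "phi t = s0" "pi' t \<in> {sig1 s0, sig2 s0}" using s01 s02 by (auto simp: sig1_def sig2_def)
        then have "R s0 (pi' t) + gamma * EE (P s0 (pi' t)) v \<le> v s0"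
          using dom unfolding v_def by blast
        then show ?thesis unfolding mR e using \<open>phi t = s0\<close> by simp
      next
        case False
        then have nt: "phi t \<noteq> s0" using split_pre[OF sm] by auto
        have "psi (phi t) = t" unfolding psi_def using split_inv[OF sm] False by auto
        then have "sig (phi t) = pi' t" using sig nt by (auto simp: sig1_def sig2_def)
        moreover have "v (phi t) = R (phi t) (sig (phi t)) + gamma * EE (P (phi t) (sig (phi t))) v"
          unfolding v_def by (rule pv_bellman[OF g])
        ultimately show ?thesis unfolding mR e by simp
      qed
    qed
    have "policy_value gamma Pt Rt mut pi' \<le> EE mut (\<lambda>t. v (phi t))"
      by (rule pv_super[OF g]) (rule super)
    also have "\<dots> = EE mu v" using EE_map[of phi mut v] mmu by simp
    also have "\<dots> = policy_value gamma P R mu sig"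
      unfolding v_def by (rule pv_linear[OF g, symmetric])
    also have "\<dots> \<le> policy_value gamma P R mu pistar" by (rule opt)
    finally show ?thesis .
  qed
  show ?thesis
    by (rule exI[of _ "\<lambda>t. pistar (phi t)"]) (simp add: s01 s02 val main)
qed

end
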